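(* Let $G=(V,E)$ be a simple directed acyclic graph with capacities $C\in\mathbb{R}_{\ge 0}^E$, let $s,t\in V$ be such that a directed $s$-$t$ path exists, and let $\gamma$ satisfy $0<\gamma\le\min_{e\in E}C(e)$. For every $s$-$t$ flow $\mathbf{f}$ with $val(\mathbf{f})<\gamma$ there exists an $s$-$t$ flow $\mathbf{f}'$ with $val(\mathbf{f}')=\gamma$ such that $\Lambda(\mathbf{f}',P)\ge\Lambda(\mathbf{f},P)$ for every set of user paths $P$ (with any admissible initial flow values).
   Context: An $s$-$t$ flow is a vector $\mathbf{f}\in\mathbb{R}^E$ with $0\le\mathbf{f}(e)\le C(e)$ for all $e\in E$ and $\sum_{(u,v)\in E}\mathbf{f}(u,v)=\sum_{(v,u)\in E}\mathbf{f}(v,u)$ for all $v\in V\setminus\{s,t\}$; its value is $val(\mathbf{f})=\sum_{(s,u)\in E}\mathbf{f}(s,u)$. A set of user paths is a set $P=\{p_1,\dots,p_k\}$ of directed paths in $G$ (each viewed as a set of edges; they need not share endpoints nor be disjoint) together with initial flow values $\lambda_1,\dots,\lambda_k\ge 0$ satisfying $\sum_{i:e\in p_i}\lambda_i\le C(e)$ for all $e\in E$. For an $s$-$t$ flow $\mathbf{f}$, $T(\mathbf{f},P)$ is the optimal value of the linear program: maximize $\sum_i\tilde\lambda_i$ subject to $\sum_{i:e\in p_i}\tilde\lambda_i\le C(e)-\mathbf{f}(e)$ for all $e\in E$ and $0\le\tilde\lambda_i\le\lambda_i$ for all $i$. The throughput reduction is $\Lambda(\mathbf{f},P)=\sum_i\lambda_i-T(\mathbf{f},P)$.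 *)

theory Defs
  imports Complex_Main
begin

definition simple_dag :: "'v set \<Rightarrow> ('v \<times> 'v) set \<Rightarrow> bool" where
  "simple_dag V E \<longleftrightarrow> finite V \<and> E \<subseteq> V \<times> V \<and> (\<forall>v. (v, v) \<notin> E) \<and> (\<forall>v. (v, v) \<notin> E\<^sup>+)"

definition is_st_flow ::
  "'v set \<Rightarrow> ('v \<times> 'v) set \<Rightarrow> ('v \<times> 'v \<Rightarrow> real) \<Rightarrow> 'v \<Rightarrow> 'v \<Rightarrow> ('v \<times> 'v \<Rightarrow> real) \<Rightarrow> bool" where
  "is_st_flow V E C s t f \<longleftrightarrow>
     (\<forall>e\<in>E. 0 \<le> f e \<and> f e \<le> C e) \<and>
     (\<forall>v\<in>V - {s, t}. (\<Sum>e\<in>{e\<in>E. snd e = v}. f e) = (\<Sum>e\<in>{e\<in>E. fst e = v}. f e))"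

definition flow_val :: "('v \<times> 'v) set \<Rightarrow> 'v \<Rightarrow> ('v \<times> 'v \<Rightarrow> real) \<Rightarrow> real" where
  "flow_val E s f = (\<Sum>e\<in>{e\<in>E. fst e = s}. f e)"

definition dpath :: "('v \<times> 'v) set \<Rightarrow> 'v list \<Rightarrow> bool" where
  "dpath E xs \<longleftrightarrow> xs \<noteq> [] \<and> distinct xs \<and> (\<forall>i. Suc i < length xs \<longrightarrow> (xs ! i, xs ! Suc i) \<in> E)"

definition pedges :: "'v list \<Rightarrow> ('v \<times> 'v) set" where
  "pedges xs = set (zip xs (tl xs))"

definition user_paths ::
  "('v \<times> 'v) set \<Rightarrow> ('v \<times> 'v \<Rightarrow> real) \<Rightarrow> nat \<Rightarrow> (nat \<Rightarrow> 'v list) \<Rightarrow> (nat \<Rightarrow> real) \<Rightarrow> bool" where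
  "user_paths E C k p lam \<longleftrightarrow>
     (\<forall>i<k. dpath E (p i) \<and> 0 \<le> lam i) \<and>
     (\<forall>e\<in>E. (\<Sum>i\<in>{i. i < k \<and> e \<in> pedges (p i)}. lam i) \<le> C e)"

definition Tput ::
  "('v \<times> 'v) set \<Rightarrow> ('v \<times> 'v \<Rightarrow> real) \<Rightarrow> ('v \<times> 'v \<Rightarrow> real) \<Rightarrow> nat \<Rightarrow> (nat \<Rightarrow> 'v list) \<Rightarrow> (nat \<Rightarrow> real) \<Rightarrow> real" where
  "Tput E C f k p lam = Sup {(\<Sum>i<k. mu i) | mu.
      (\<forall>e\<in>E. (\<Sum>i\<in>{i. i < k \<and> e \<in> pedges (p i)}. mu i) \<le> C e - f e) \<and>
      (\<forall>i<k. 0 \<le> mu i \<and> mu i \<le> lam i)}"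

definition tred ::
  "('v \<times> 'v) set \<Rightarrow> ('v \<times> 'v \<Rightarrow> real) \<Rightarrow> ('v \<times> 'v \<Rightarrow> real) \<Rightarrow> nat \<Rightarrow> (nat \<Rightarrow> 'v list) \<Rightarrow> (nat \<Rightarrow> real) \<Rightarrow> real" where
  "tred E C f k p lam = (\<Sum>i<k. lam i) - Tput E C f k p lam"

end

theory Submission
  imports Defs
begin

definition outs :: "('v \<times> 'v) set \<Rightarrow> ('v \<times> 'v \<Rightarrow> real) \<Rightarrow> 'v \<Rightarrow> real" where
  "outs E f v = (\<Sum>e\<in>{e\<in>E. fst e = v}. f e)"
definition ins :: "('v \<times> 'v) set \<Rightarrow> ('v \<times> 'v \<Rightarrow> real) \<Rightarrow> 'v \<Rightarrow> real" where
  "ins E f v = (\<Sum>e\<in>{e\<in>E. snd e = v}. f e)"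

lemma group_fst:
  assumes "finite E" "finite X"
  shows "(\<Sum>v\<in>X. outs E f v) = (\<Sum>e\<in>{e\<in>E. fst e \<in> X}. f e)"
proof -
  have "(\<Sum>v\<in>X. sum f {x. x \<in> {e\<in>E. fst e \<in> X} \<and> fst x = v}) = (\<Sum>e\<in>{e\<in>E. fst e \<in> X}. f e)"
    by (rule sum.group) (use assms in auto)
  moreover have "\<And>v. v \<in> X \<Longrightarrow> {x. x \<in> {e\<in>E. fst e \<in> X} \<and> fst x = v} = {e\<in>E. fst e = v}" by auto
  ultimately show ?thesis unfolding outs_def by simp
qed

lemma group_snd:
  assumes "finite E" "finite X"
  shows "(\<Sum>v\<in>X. ins E f v) = (\<Sum>e\<in>{e\<in>E. snd e \<in> X}. f e)"
proof -
  have "(\<Sum>v\<in>X. sum f {x. x \<in> {e\<in>E. snd e \<in> X} \<and> snd x = v}) = (\<Sum>e\<in>{e\<in>E. snd e \<in> X}. f e)"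
    by (rule sum.group) (use assms in auto)
  moreover have "\<And>v. v \<in> X \<Longrightarrow> {x. x \<in> {e\<in>E. snd e \<in> X} \<and> snd x = v} = {e\<in>E. snd e = v}" by auto
  ultimately show ?thesis unfolding ins_def by simp
qed

lemma cut_eq:
  assumes "finite E" "finite X" "X \<subseteq> V" "is_st_flow V E C s t f"
  shows "(\<Sum>v\<in>X \<inter> {s,t}. outs E f v - ins E f v)
       = (\<Sum>e\<in>{e\<in>E. fst e \<in> X}. f e) - (\<Sum>e\<in>{e\<in>E. snd e \<in> X}. f e)"
proof -
  have "(\<Sum>v\<in>X \<inter> {s,t}. outs E f v - ins E f v) = (\<Sum>v\<in>X. outs E f v - ins E f v)"
  proof (rule sum.mono_neutral_left)
    show "\<forall>i\<in>X - X \<inter> {s, t}. outs E f i - ins E f i = 0"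
    proof
      fix i assume i: "i \<in> X - X \<inter> {s, t}"
      then have "i \<in> V - {s,t}" using assms(3) by auto
      then show "outs E f i - ins E f i = 0"
        using assms(4) unfolding is_st_flow_def outs_def ins_def by auto
    qed
  qed (use assms in auto)
  also have "\<dots> = (\<Sum>v\<in>X. outs E f v) - (\<Sum>v\<in>X. ins E f v)" by (simp add: sum_subtractf)
  finally show ?thesis using group_fst[OF assms(1,2)] group_snd[OF assms(1,2)] by simp
qed

lemma fe_le_val:
  assumes dag: "simple_dag V E" and fl: "is_st_flow V E C s t f"
    and sV: "s \<in> V" and tV: "t \<in> V" and st: "(s, t) \<in> E\<^sup>+" and e0: "e0 \<in> E"
  shows "f e0 \<le> flow_val E s f"
proof -
  have finV: "finite V" and EV: "E \<subseteq> V \<times> V" and acyc: "\<And>v. (v,v) \<notin> E\<^sup>+"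
    using dag unfolding simple_dag_def by auto
  have finE: "finite E" using finV EV by (meson finite_SigmaI finite_subset)
  have nn: "\<And>e. e \<in> E \<Longrightarrow> 0 \<le> f e" using fl unfolding is_st_flow_def by auto
  have snt: "s \<noteq> t" using st acyc by auto
  define net where "net v = outs E f v - ins E f v" for v
  define B where "B = {x. (t, x) \<in> E\<^sup>*}"
  have BV: "B \<subseteq> V"
  proof
    fix x assume "x \<in> B"
    then have "(t,x) \<in> E\<^sup>*" by (simp add: B_def)
    then show "x \<in> V" using tV EV by (induction rule: rtrancl_induct) auto
  qed
  have finB: "finite B" using BV finV finite_subset by blast
  have sB: "s \<notin> B"
  proof
    assume "s \<in> B"
    then have "(t,s) \<in> E\<^sup>*" by (simp add: B_def)
    with st have "(s,s) \<in> E\<^sup>+" by (meson trancl_rtrancl_trancl)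
    with acyc show False by blast
  qed
  have BI: "B \<inter> {s,t} = {t}" using sB by (auto simp: B_def)
  have "{e\<in>E. fst e \<in> B} \<subseteq> {e\<in>E. snd e \<in> B}"
    by (auto simp: B_def intro: rtrancl_into_rtrancl)
  then have "(\<Sum>e\<in>{e\<in>E. fst e \<in> B}. f e) \<le> (\<Sum>e\<in>{e\<in>E. snd e \<in> B}. f e)"
    by (intro sum_mono2) (use finE nn in auto)
  then have nett: "net t \<le> 0"
    using cut_eq[OF finE finB BV fl] BI by (simp add: net_def)
  have valnn: "0 \<le> flow_val E s f" unfolding flow_val_def by (rule sum_nonneg) (use nn in auto)
  have nets: "net s \<le> flow_val E s f"
  proof -
    have "0 \<le> ins E f s" unfolding ins_def by (rule sum_nonneg) (use nn in auto)
    then show ?thesis by (simp add: net_def outs_def flow_val_def)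
  qed
  define A where "A = {x. (x, fst e0) \<in> E\<^sup>*}"
  have u: "fst e0 \<in> V" using e0 EV by auto
  have AV: "A \<subseteq> V"
  proof
    fix x assume "x \<in> A"
    then have "(x, fst e0) \<in> E\<^sup>*" by (simp add: A_def)
    then show "x \<in> V" using u EV by (induction rule: converse_rtrancl_induct) auto
  qed
  have finA: "finite A" using AV finV finite_subset by blast
  have sub: "{e\<in>E. snd e \<in> A} \<subseteq> {e\<in>E. fst e \<in> A}"
    by (auto simp: A_def intro: converse_rtrancl_into_rtrancl)
  have e0d: "e0 \<in> {e\<in>E. fst e \<in> A} - {e\<in>E. snd e \<in> A}"
  proof -
    have "snd e0 \<notin> A"
    proof
      assume "snd e0 \<in> A"
      then have "(snd e0, fst e0) \<in> E\<^sup>*" by (simp add: A_def)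
      moreover have "(fst e0, snd e0) \<in> E" using e0 by simp
      ultimately have "(fst e0, fst e0) \<in> E\<^sup>+" by (meson rtrancl_into_trancl2)
      with acyc show False by blast
    qed
    then show ?thesis using e0 by (auto simp: A_def)
  qed
  have fin1: "finite {e\<in>E. fst e \<in> A}" using finE by simp
  have "(\<Sum>e\<in>{e\<in>E. fst e \<in> A}. f e) = (\<Sum>e\<in>{e\<in>E. snd e \<in> A}. f e)
        + (\<Sum>e\<in>{e\<in>E. fst e \<in> A} - {e\<in>E. snd e \<in> A}. f e)"
    using sum.subset_diff[OF sub fin1, of f] by linarith
  moreover have "f e0 \<le> (\<Sum>e\<in>{e\<in>E. fst e \<in> A} - {e\<in>E. snd e \<in> A}. f e)"
    by (rule member_le_sum) (use e0d nn fin1 in auto)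
  ultimately have "f e0 \<le> (\<Sum>v\<in>A \<inter> {s,t}. net v)"
    using cut_eq[OF finE finA AV fl] by (simp add: net_def)
  also have "(\<Sum>v\<in>A \<inter> {s,t}. net v) \<le> flow_val E s f"
  proof (cases "s \<in> A"; cases "t \<in> A")
    assume "s \<in> A" "t \<in> A"
    then have "A \<inter> {s,t} = {s,t}" by auto
    then show ?thesis using snt nets nett by simp
  next
    assume "s \<in> A" "t \<notin> A"
    then have "A \<inter> {s,t} = {s}" by auto
    then show ?thesis using nets by simp
  next
    assume "s \<notin> A" "t \<in> A"
    then have "A \<inter> {s,t} = {t}" by auto
    then show ?thesis using nett valnn by simp
  next
    assume "s \<notin> A" "t \<notin> A"
    then have "A \<inter> {s,t} = {}" by auto
    then show ?thesis using valnn by simp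
  qed
  finally show ?thesis .
qed



lemma outs_add:
  "finite E \<Longrightarrow> outs E (\<lambda>e. g e + h e) v = outs E g v + outs E h v"
  "finite E \<Longrightarrow> ins E (\<lambda>e. g e + h e) v = ins E g v + ins E h v"
  unfolding outs_def ins_def by (simp_all add: sum.distrib)

lemma outs_ind:
  assumes "finite E" "(z,y) \<in> E"
  shows "outs E (\<lambda>e. if e = (z,y) then 1 else 0) v = (if v = z then 1 else 0)"
    "ins E (\<lambda>e. if e = (z,y) then 1 else 0) v = (if v = y then 1 else 0)"
  using assms unfolding outs_def ins_def by (auto simp: sum.delta)

lemma path_flow:
  assumes finE: "finite E" and acyc: "\<And>v. (v,v) \<notin> E\<^sup>+" and xy: "(x,y) \<in> E\<^sup>+"
  shows "\<exists>g. (\<forall>e\<in>E. 0 \<le> g e \<and> g e \<le> 1) \<and>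
    (\<forall>e\<in>E. g e \<noteq> 0 \<longrightarrow> (x, fst e) \<in> E\<^sup>* \<and> (snd e, y) \<in> E\<^sup>*) \<and>
    (\<forall>v. outs E g v - ins E g v = (if v = x then 1 else 0) - (if v = y then 1 else 0))"
  using xy
proof (induction rule: trancl_induct)
  case (base y)
  show ?case
    by (rule exI[of _ "\<lambda>e. if e = (x,y) then 1 else 0"]) (use base finE in \<open>auto simp: outs_ind\<close>)
next
  case (step z y)
  then obtain g where g1: "\<forall>e\<in>E. 0 \<le> g e \<and> g e \<le> 1"
    and g2: "\<forall>e\<in>E. g e \<noteq> 0 \<longrightarrow> (x, fst e) \<in> E\<^sup>* \<and> (snd e, z) \<in> E\<^sup>*"
    and g3: "\<forall>v. outs E g v - ins E g v = (if v = x then 1 else 0) - (if v = z then 1 else 0)"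
    by blast
  have gz: "g (z,y) = 0"
  proof (rule ccontr)
    assume "g (z,y) \<noteq> 0"
    then have "(y,z) \<in> E\<^sup>*" using g2 step(2) by auto
    then have "(z,z) \<in> E\<^sup>+" using step(2) by (meson rtrancl_into_trancl2)
    with acyc show False by blast
  qed
  define g' where "g' e = g e + (if e = (z,y) then 1 else 0)" for e
  have "\<forall>e\<in>E. 0 \<le> g' e \<and> g' e \<le> 1" using g1 gz by (auto simp: g'_def)
  moreover have "\<forall>e\<in>E. g' e \<noteq> 0 \<longrightarrow> (x, fst e) \<in> E\<^sup>* \<and> (snd e, y) \<in> E\<^sup>*"
  proof (intro ballI impI)
    fix e assume e: "e \<in> E" "g' e \<noteq> 0"
    show "(x, fst e) \<in> E\<^sup>* \<and> (snd e, y) \<in> E\<^sup>*"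
    proof (cases "e = (z,y)")
      case True then show ?thesis using step(1) by auto
    next
      case False
      then have "g e \<noteq> 0" using e by (simp add: g'_def)
      then show ?thesis using g2 e step(2) by (meson rtrancl.rtrancl_into_rtrancl)
    qed
  qed
  moreover have "\<forall>v. outs E g' v - ins E g' v = (if v = x then 1 else 0) - (if v = y then 1 else 0)"
  proof
    fix v
    have "outs E g' v = outs E g v + (if v = z then 1 else 0)"
      "ins E g' v = ins E g v + (if v = y then 1 else 0)"
      unfolding g'_def using outs_add[OF finE] outs_ind[OF finE step(2)] by simp_all
    then show "outs E g' v - ins E g' v = (if v = x then 1 else 0) - (if v = y then 1 else 0)"
      using g3[rule_format, of v] by auto
  qed
  ultimately show ?case by blast
qed

lemma Tput_mono:
  assumes "\<forall>e\<in>E. f e \<le> f' e \<and> f' e \<le> C e" "\<forall>i<k. 0 \<le> lam i"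
  shows "Tput E C f' k p lam \<le> Tput E C f k p lam"
  unfolding Tput_def
proof (rule cSup_subset_mono)
  show "{(\<Sum>i<k. mu i) | mu.
      (\<forall>e\<in>E. (\<Sum>i\<in>{i. i < k \<and> e \<in> pedges (p i)}. mu i) \<le> C e - f' e) \<and>
      (\<forall>i<k. 0 \<le> mu i \<and> mu i \<le> lam i)} \<noteq> {}"
    using assms by (auto intro!: exI[of _ "\<lambda>_. 0"])
  show "bdd_above {(\<Sum>i<k. mu i) | mu.
      (\<forall>e\<in>E. (\<Sum>i\<in>{i. i < k \<and> e \<in> pedges (p i)}. mu i) \<le> C e - f e) \<and>
      (\<forall>i<k. 0 \<le> mu i \<and> mu i \<le> lam i)}"
    by (rule bdd_aboveI[of _ "\<Sum>i<k. lam i"]) (auto intro!: sum_mono)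
  show "{(\<Sum>i<k. mu i) | mu.
      (\<forall>e\<in>E. (\<Sum>i\<in>{i. i < k \<and> e \<in> pedges (p i)}. mu i) \<le> C e - f' e) \<and>
      (\<forall>i<k. 0 \<le> mu i \<and> mu i \<le> lam i)} \<subseteq> {(\<Sum>i<k. mu i) | mu.
      (\<forall>e\<in>E. (\<Sum>i\<in>{i. i < k \<and> e \<in> pedges (p i)}. mu i) \<le> C e - f e) \<and>
      (\<forall>i<k. 0 \<le> mu i \<and> mu i \<le> lam i)}"
  proof (rule subsetI)
    fix x assume "x \<in> {(\<Sum>i<k. mu i) | mu.
      (\<forall>e\<in>E. (\<Sum>i\<in>{i. i < k \<and> e \<in> pedges (p i)}. mu i) \<le> C e - f' e) \<and>
      (\<forall>i<k. 0 \<le> mu i \<and> mu i \<le> lam i)}"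
    then obtain mu where x: "x = (\<Sum>i<k. mu i)"
      and m1: "\<forall>e\<in>E. (\<Sum>i\<in>{i. i < k \<and> e \<in> pedges (p i)}. mu i) \<le> C e - f' e"
      and m2: "\<forall>i<k. 0 \<le> mu i \<and> mu i \<le> lam i" by blast
    have "\<forall>e\<in>E. (\<Sum>i\<in>{i. i < k \<and> e \<in> pedges (p i)}. mu i) \<le> C e - f e"
    proof
      fix e assume e: "e \<in> E"
      show "(\<Sum>i\<in>{i. i < k \<and> e \<in> pedges (p i)}. mu i) \<le> C e - f e"
        using m1[rule_format, OF e] assms(1)[rule_format, OF e] by linarith
    qed
    then show "x \<in> {(\<Sum>i<k. mu i) | mu.
      (\<forall>e\<in>E. (\<Sum>i\<in>{i. i < k \<and> e \<in> pedges (p i)}. mu i) \<le> C e - f e) \<and>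
      (\<forall>i<k. 0 \<le> mu i \<and> mu i \<le> lam i)}" using x m2 by blast
  qed
qed

theorem mainTheorem1:
  fixes V :: "'v set" and E :: "('v \<times> 'v) set" and C :: "'v \<times> 'v \<Rightarrow> real"
    and s t :: 'v and \<gamma> :: real
  assumes "simple_dag V E"
    and "\<forall>e\<in>E. 0 \<le> C e"
    and "s \<in> V" and "t \<in> V"
    and "(s, t) \<in> E\<^sup>+"
    and "0 < \<gamma>" and "\<forall>e\<in>E. \<gamma> \<le> C e"
  shows "\<forall>f. is_st_flow V E C s t f \<and> flow_val E s f < \<gamma> \<longrightarrow>
           (\<exists>f'. is_st_flow V E C s t f' \<and> flow_val E s f' = \<gamma> \<and>
              (\<forall>k p lam. user_paths E C k p lam \<longrightarrow>
                  tred E C f' k p lam \<ge> tred E C f k p lam))"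
proof (intro allI impI)
  fix f assume fa: "is_st_flow V E C s t f \<and> flow_val E s f < \<gamma>"
  then have fl: "is_st_flow V E C s t f" and lt: "flow_val E s f < \<gamma>" by auto
  have finV: "finite V" and EV: "E \<subseteq> V \<times> V" and acyc: "\<And>v. (v,v) \<notin> E\<^sup>+"
    using assms(1) unfolding simple_dag_def by auto
  have finE: "finite E" using finV EV by (meson finite_SigmaI finite_subset)
  have snt: "s \<noteq> t" using assms(5) acyc by auto
  obtain g where g1: "\<forall>e\<in>E. 0 \<le> g e \<and> g e \<le> 1"
    and g2: "\<forall>e\<in>E. g e \<noteq> 0 \<longrightarrow> (s, fst e) \<in> E\<^sup>* \<and> (snd e, t) \<in> E\<^sup>*"
    and g3: "\<forall>v. outs E g v - ins E g v = (if v = s then 1 else 0) - (if v = t then 1 else 0)"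
    using path_flow[OF finE acyc assms(5)] by blast
  define d where "d = \<gamma> - flow_val E s f"
  have d0: "0 < d" using lt by (simp add: d_def)
  define f' where "f' e = f e + d * g e" for e
  have fle: "\<And>e. e \<in> E \<Longrightarrow> f e \<le> flow_val E s f"
    using fe_le_val[OF assms(1) fl assms(3,4,5)] by blast
  have nn: "\<And>e. e \<in> E \<Longrightarrow> 0 \<le> f e" using fl unfolding is_st_flow_def by auto
  have dg: "\<And>e. e \<in> E \<Longrightarrow> 0 \<le> d * g e \<and> d * g e \<le> d"
    using g1 d0 by (simp add: mult_left_le)
  have bnd: "\<forall>e\<in>E. f e \<le> f' e \<and> f' e \<le> C e"
  proof
    fix e assume e: "e \<in> E"
    have "f' e \<le> flow_val E s f + d" using fle[OF e] dg[OF e] by (simp add: f'_def)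
    also have "\<dots> \<le> C e" using assms(7) e by (simp add: d_def)
    finally show "f e \<le> f' e \<and> f' e \<le> C e" using dg[OF e] by (simp add: f'_def)
  qed
  have os: "\<And>v. outs E f' v = outs E f v + d * outs E g v"
    "\<And>v. ins E f' v = ins E f v + d * ins E g v"
    unfolding f'_def outs_def ins_def by (simp_all add: sum.distrib sum_distrib_left)
  have "is_st_flow V E C s t f'"
    unfolding is_st_flow_def
  proof (intro conjI ballI)
    fix e assume e: "e \<in> E"
    show "0 \<le> f' e" using bnd nn[OF e] e by (meson order_trans)
  next
    fix e assume e: "e \<in> E"
    show "f' e \<le> C e" using bnd e by blast
  next
    fix v assume v: "v \<in> V - {s,t}"
    then have "outs E f v = ins E f v" using fl unfolding is_st_flow_def outs_def ins_def by auto
    moreover have "outs E g v = ins E g v" using g3[rule_format, of v] v by auto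
    ultimately have "outs E f' v = ins E f' v" using os by simp
    then show "(\<Sum>e\<in>{e\<in>E. snd e = v}. f' e) = (\<Sum>e\<in>{e\<in>E. fst e = v}. f' e)"
      unfolding outs_def ins_def by simp
  qed
  moreover have "flow_val E s f' = \<gamma>"
  proof -
    have "ins E g s = 0" unfolding ins_def
    proof (rule sum.neutral, rule ballI)
      fix e assume e: "e \<in> {e\<in>E. snd e = s}"
      show "g e = 0"
      proof (rule ccontr)
        assume "g e \<noteq> 0"
        then have "(s, fst e) \<in> E\<^sup>*" using g2 e by auto
        moreover have "(fst e, s) \<in> E" using e by (cases e) auto
        ultimately have "(s,s) \<in> E\<^sup>+" by (meson rtrancl_into_trancl1)
        with acyc show False by blast
      qed
    qed
    then have "outs E g s = 1" using g3[rule_format, of s] snt by simp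
    then show ?thesis using os(1)[of s] unfolding flow_val_def outs_def d_def by simp
  qed
  moreover have "\<forall>k p lam. user_paths E C k p lam \<longrightarrow> tred E C f' k p lam \<ge> tred E C f k p lam"
  proof (intro allI impI)
    fix k p lam assume "user_paths E C k p lam"
    then have "\<forall>i<k. 0 \<le> lam i" unfolding user_paths_def by auto
    then show "tred E C f' k p lam \<ge> tred E C f k p lam"
      using Tput_mono[OF bnd] unfolding tred_def by (simp add: le_diff_eq)
  qed
  ultimately show "\<exists>f'. is_st_flow V E C s t f' \<and> flow_val E s f' = \<gamma> \<and>
              (\<forall>k p lam. user_paths E C k p lam \<longrightarrow>
                  tred E C f' k p lam \<ge> tred E C f k p lam)" by blast
qed

end
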